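(* Let $n$ be a positive integer, $\gamma\in\mathbb{F}_{2^n}\setminus\mathbb{F}_2$, and let $f$ be the function on $\mathbb{F}_{2^n}$ defined by $f(1)=\gamma^{-1}$, $f(\gamma)=1$, $f(0)=0$ and $f(x)=x^{-1}$ for $x\notin\{0,1,\gamma\}$. Let $C_n=\{\alpha^3:\alpha\in\mathbb{F}_{2^n}\setminus\mathbb{F}_4\}$. Then \[ \nabla_f=\begin{cases}8,&\text{if } [\,2\mid n \text{ and } \{\gamma^3+\gamma^2,\gamma+1\}\cap C_n\neq\emptyset\,] \text{ or } [\,3\mid n \text{ and } \gamma\in\mathbb{F}_8\setminus\mathbb{F}_2\,],\\ 4,&\text{otherwise.}\end{cases} \] In particular, if $n$ is odd and $3\nmid n$, then $\nabla_f=4$ for all $\gamma\in\mathbb{F}_{2^n}\setminus\mathbb{F}_2$.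
   Context: The function $f$ is the swapped inverse function $Inv\circ(1,\gamma)$ with $Inv(x)=x^{2^n-2}$ and $(1,\gamma)$ the transposition swapping $1$ and $\gamma$. For $a,b\in\mathbb{F}_{2^n}$, $\nabla_f(a,b)$ is the number of $x\in\mathbb{F}_{2^n}$ with $f(x+a+b)+f(x+a)+f(x+b)+f(x)=0$, and $\nabla_f=\max\{\nabla_f(a,b): a,b\in\mathbb{F}_{2^n}\setminus\{0\},\ a\neq b\}$. $\mathbb{F}_4,\mathbb{F}_8$ denote the intersections of $\mathbb{F}_{2^n}$ with the subfields of order $4$ and $8$; so $C_n$ is the set of nonzero cubes in $\mathbb{F}_{2^n}$ other than $1$. *)

theory Defs
  imports Main
begin

text \<open>The finite field F_{2^n} is modelled as a finite field type 'a with card UNIV = 2^n.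
  Intersections with subfields: F_2 = {x. x^2 = x}, F_4 = {x. x^4 = x}, F_8 = {x. x^8 = x}.\<close>

definition swapped_inv :: "'a::field \<Rightarrow> 'a \<Rightarrow> 'a" where
  "swapped_inv \<gamma> x = inverse (if x = 1 then \<gamma> else if x = \<gamma> then 1 else x)"

definition boomerang_count :: "('a::ring \<Rightarrow> 'a) \<Rightarrow> 'a \<Rightarrow> 'a \<Rightarrow> nat" where
  "boomerang_count f a b = card {x. f (x + a + b) + f (x + a) + f (x + b) + f x = 0}"

definition boomerang_uniformity :: "('a::ring \<Rightarrow> 'a) \<Rightarrow> nat" where
  "boomerang_uniformity f =
     Max {boomerang_count f a b | a b. a \<noteq> 0 \<and> b \<noteq> 0 \<and> a \<noteq> b}"

definition cubes_C :: "'a::field set" where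
  "cubes_C = {\<alpha> ^ 3 | \<alpha>. \<alpha> ^ 4 \<noteq> \<alpha>}"

end

theory Submission imports Defs "HOL-Computational_Algebra.Polynomial" begin

lemma fermat_ff:
  fixes x :: "'a::{field,finite}"
  shows "x ^ card (UNIV :: 'a set) = x"
proof (cases "x = 0")
  case False
  have "x * (\<Prod>y\<in>UNIV-{0}. x * y) = x * x ^ (card (UNIV :: 'a set) - 1) * \<Prod>(UNIV-{0})"
    by (simp add: prod.distrib mult_ac)
  also have "x * x ^ (card (UNIV :: 'a set) - 1) = x ^ Suc (card (UNIV :: 'a set) - 1)"
    by (subst power_Suc) auto
  also have "Suc (card (UNIV :: 'a set) - 1) = card (UNIV :: 'a set)"
    using finite_UNIV_card_ge_0[where ?'a = 'a] by simp
  also have "(\<Prod>y\<in>UNIV-{0}. x * y) = (\<Prod>y\<in>UNIV-{0}. y)"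
    by (rule prod.reindex_bij_witness[of _ "\<lambda>y. y / x" "\<lambda>y. x * y"]) (use False in auto)
  finally show ?thesis
    by simp
qed (use finite_UNIV_card_ge_0[where ?'a = 'a] in auto)

lemma char2_of_card:
  assumes "card (UNIV :: 'a::{field,finite} set) = 2 ^ n" "n > 0"
  shows "(2::'a) = 0"
proof -
  have "(-1::'a) ^ card (UNIV :: 'a set) = -1" by (rule fermat_ff)
  moreover have "even (card (UNIV :: 'a set))" using assms by simp
  ultimately have "(1::'a) = -1" by simp
  then show ?thesis by (metis add_eq_0_iff one_add_one)
qed

lemma c2_self: "(2::'a::field) = 0 \<Longrightarrow> x + x = (0::'a)"
  by (metis mult_2 mult_zero_left)
lemma c2_self2: "(2::'a::field) = 0 \<Longrightarrow> x + (x + z) = (z::'a)"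
  by (metis add.assoc add_0 c2_self)
lemma c2_neg: "(2::'a::field) = 0 \<Longrightarrow> - x = (x::'a)"
  by (metis add_eq_0_iff c2_self)
lemma c2_diff: "(2::'a::field) = 0 \<Longrightarrow> x - y = (x + y::'a)"
  by (metis c2_neg diff_conv_add_uminus)
lemma c2_eq: "(2::'a::field) = 0 \<Longrightarrow> (x = y) \<longleftrightarrow> (x + y = (0::'a))"
  by (metis add_diff_cancel_right' c2_diff c2_self diff_self)
lemma c2_move: "(2::'a::field) = 0 \<Longrightarrow> (u + v = w) \<longleftrightarrow> (u + w = (v::'a))"
  by (metis add.commute c2_self2)
lemma c2_cert: "(2::'a::field) = 0 \<Longrightarrow> G = M * H + 2 * R \<Longrightarrow> H = 0 \<Longrightarrow> G = (0::'a)"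
  by simp
lemma c2_cert2: "(2::'a::field) = 0 \<Longrightarrow> G = M * H + M2 * H2 + 2 * R \<Longrightarrow> H = 0 \<Longrightarrow> H2 = 0 \<Longrightarrow> G = (0::'a)"
  by simp
lemma c2_id: "(2::'a::field) = 0 \<Longrightarrow> G = H + 2 * R \<Longrightarrow> G = (H::'a)"
  by simp

lemma inv4_num:
  fixes x1 x2 x3 x4 :: "'a::field"
  assumes "x1 \<noteq> 0" "x2 \<noteq> 0" "x3 \<noteq> 0" "x4 \<noteq> 0"
  shows "inverse x1 + inverse x2 + inverse x3 + inverse x4 = 0 \<longleftrightarrow>
     x2*x3*x4 + x1*x3*x4 + x1*x2*x4 + x1*x2*x3 = 0"
proof -
  have "inverse x1 + inverse x2 + inverse x3 + inverse x4 =
     (x2*x3*x4 + x1*x3*x4 + x1*x2*x4 + x1*x2*x3) / (x1*x2*x3*x4)"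
    using assms by (simp add: field_simps)
  then show ?thesis using assms by simp
qed

lemma inv3_num:
  fixes x1 x2 x3 :: "'a::field"
  assumes "x1 \<noteq> 0" "x2 \<noteq> 0" "x3 \<noteq> 0"
  shows "inverse x1 + inverse x2 + inverse x3 = 0 \<longleftrightarrow>
     x2*x3 + x1*x3 + x1*x2 = 0"
proof -
  have "inverse x1 + inverse x2 + inverse x3 =
     (x2*x3 + x1*x3 + x1*x2) / (x1*x2*x3)"
    using assms by (simp add: field_simps)
  then show ?thesis using assms by simp
qed

lemma inv4_imp:
  fixes x1 x2 x3 x4 :: "'a::field"
  assumes "x1 \<noteq> 0" "x2 \<noteq> 0" "x3 \<noteq> 0" "x4 \<noteq> 0"
    "inverse x1 + inverse x2 + inverse x3 + inverse x4 = 0"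
  shows "x2*x3*x4 + x1*x3*x4 + x1*x2*x4 + x1*x2*x3 = 0"
  using assms inv4_num by blast

lemma inv4_rev:
  fixes x1 x2 x3 x4 :: "'a::field"
  assumes "x1 \<noteq> 0" "x2 \<noteq> 0" "x3 \<noteq> 0" "x4 \<noteq> 0"
    "x2*x3*x4 + x1*x3*x4 + x1*x2*x4 + x1*x2*x3 = 0"
  shows "inverse x1 + inverse x2 + inverse x3 + inverse x4 = 0"
  using assms inv4_num by blast

lemma inv3_imp:
  fixes x1 x2 x3 :: "'a::field"
  assumes "x1 \<noteq> 0" "x2 \<noteq> 0" "x3 \<noteq> 0"
    "inverse x1 + inverse x2 + inverse x3 = 0"
  shows "x2*x3 + x1*x3 + x1*x2 = 0"
  using assms inv3_num by blast

lemma inv3_rev: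
  fixes x1 x2 x3 :: "'a::field"
  assumes "x1 \<noteq> 0" "x2 \<noteq> 0" "x3 \<noteq> 0"
    "x2*x3 + x1*x3 + x1*x2 = 0"
  shows "inverse x1 + inverse x2 + inverse x3 = 0"
  using assms inv3_num by blast

lemma quad_none:
  fixes p q r :: "'a::field"
  assumes c2: "(2::'a) = 0" and nz: "p \<noteq> 0" "q \<noteq> 0" "r \<noteq> 0" "p + q + r \<noteq> 0"
    and d: "p \<noteq> q" "p \<noteq> r" "q \<noteq> r"
  shows "inverse p + inverse q + inverse r + inverse (p + q + r) \<noteq> 0"
proof
  assume "inverse p + inverse q + inverse r + inverse (p + q + r) = 0"
  then have N: "q*r*(p+q+r) + p*r*(p+q+r) + p*q*(p+q+r) + p*q*r = 0"
    using nz by (simp add: inv4_num)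
  have "q*r*(p+q+r) + p*r*(p+q+r) + p*q*(p+q+r) + p*q*r = (p+q)*(p+r)*(q+r) + 2*(p*q*r)"
    by algebra
  with N c2 have "(p+q)*(p+r)*(q+r) = 0" by simp
  moreover have "p + q \<noteq> 0" "p + r \<noteq> 0" "q + r \<noteq> 0"
    using d c2 c2_eq by blast+
  ultimately show False by simp
qed

definition sw :: "'a \<Rightarrow> 'a::field \<Rightarrow> 'a" where
  "sw g x = (if x = 1 then g else if x = g then 1 else x)"

definition XX :: "'a::field \<Rightarrow> 'a \<Rightarrow> 'a \<Rightarrow> 'a set" where
  "XX g a b = {x. swapped_inv g (x+a+b) + swapped_inv g (x+a) + swapped_inv g (x+b) + swapped_inv g x = 0}"

definition VV :: "'a::field \<Rightarrow> 'a \<Rightarrow> 'a set" where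
  "VV a b = {0, a, b, a + b}"

definition coset :: "'a::field \<Rightarrow> 'a \<Rightarrow> 'a \<Rightarrow> 'a set" where
  "coset p a b = (\<lambda>v. p + v) ` VV a b"

definition valid :: "'a::field \<Rightarrow> 'a \<Rightarrow> bool" where
  "valid a b \<longleftrightarrow> a \<noteq> 0 \<and> b \<noteq> 0 \<and> a \<noteq> b"

locale L2 =
  fixes g :: "'a::field"
  assumes c2: "(2::'a) = 0" and g0: "g \<noteq> 0" and g1: "g \<noteq> 1"
begin

lemma c2s[simp]: "(2::'a) = 0" by (rule c2)
lemma self[simp]: "x + x = (0::'a)" using c2 by (rule c2_self)
lemma self2[simp]: "x + (x + z) = (z::'a)" using c2 by (rule c2_self2)
lemma neg[simp]: "- x = (x::'a)" using c2 by (rule c2_neg)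
lemma move: "(u + v = w) \<longleftrightarrow> (u + w = (v::'a))" using c2 by (rule c2_move)
lemma sum0: "(u + v = 0) \<longleftrightarrow> (u = (v::'a))" using c2 c2_eq by metis

lemma f_sw: "swapped_inv g x = inverse (sw g x)"
  by (simp add: swapped_inv_def sw_def)
lemma sw_gen: "x \<noteq> 1 \<Longrightarrow> x \<noteq> g \<Longrightarrow> sw g x = x" by (simp add: sw_def)
lemma sw_1[simp]: "sw g 1 = g" by (simp add: sw_def)
lemma sw_g[simp]: "sw g g = 1" using g1 by (simp add: sw_def)
lemma sw_0[simp]: "sw g 0 = 0" using g0 by (simp add: sw_def)
lemma sw_nz: "x \<noteq> 0 \<Longrightarrow> sw g x \<noteq> 0" using g0 by (simp add: sw_def)
lemma one_plus_g: "1 + g \<noteq> (0::'a)" "g + 1 \<noteq> 0" using g1 sum0 by (auto simp: add.commute)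

lemma XX_iff: "x \<in> XX g a b \<longleftrightarrow>
   inverse (sw g (x + (a + b))) + inverse (sw g (x + a)) + inverse (sw g (x + b)) + inverse (sw g x) = 0"
  by (simp add: XX_def f_sw add.assoc)

lemma XX_shift_a: "x \<in> XX g a b \<Longrightarrow> x + a \<in> XX g a b"
  unfolding XX_iff by (simp add: ac_simps)
lemma XX_shift_b: "x \<in> XX g a b \<Longrightarrow> x + b \<in> XX g a b"
  unfolding XX_iff by (simp add: ac_simps)
lemma XX_shift: "x \<in> XX g a b \<Longrightarrow> v \<in> VV a b \<Longrightarrow> x + v \<in> XX g a b"
  unfolding VV_def using XX_shift_a XX_shift_b
  by (metis add.assoc add.right_neutral empty_iff insert_iff)

lemma XX_swap: "XX g a b = XX g b a"
  unfolding XX_def by (simp add: ac_simps)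
lemma XX_sum: "XX g a b = XX g a (a + b)"
  by (rule set_eqI) (simp add: XX_iff ac_simps)
lemma VV_swap: "VV a b = VV b (a::'a)"
  unfolding VV_def by (auto simp: ac_simps)
lemma VV_sum: "VV a b = VV a (a + (b::'a))"
  unfolding VV_def by (auto simp: ac_simps)
lemma valid_swap: "valid a b \<Longrightarrow> valid b (a::'a)" unfolding valid_def by auto
lemma valid_sum: "valid a b \<Longrightarrow> valid a (a + (b::'a))" unfolding valid_def
proof (elim conjE, intro conjI)
  assume "a \<noteq> 0" "b \<noteq> 0" "a \<noteq> b"
  then show "a \<noteq> 0" "a + b \<noteq> 0" "a \<noteq> a + b" by (auto simp: sum0 add.commute)
qed

lemma normalize:
  assumes "valid a b" "c \<in> VV a b" "c \<noteq> 0"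
  obtains d where "valid c d" "XX g a b = XX g c d" "VV a b = VV c d"
proof -
  have "c = a \<or> c = b \<or> c = a + b" using assms unfolding VV_def by auto
  then show ?thesis
  proof (elim disjE)
    assume "c = a" then show ?thesis using that assms by blast
  next
    assume "c = b" then show ?thesis using that[of a] assms XX_swap VV_swap valid_swap by metis
  next
    assume h: "c = a + b"
    have "valid (a+b) a" using valid_swap[OF valid_sum[OF assms(1)]] .
    moreover have "XX g a b = XX g (a+b) a" using XX_sum XX_swap by metis
    moreover have "VV a b = VV (a+b) a" using VV_sum VV_swap by metis
    ultimately show ?thesis using that h by blast
  qed
qed

lemma VV_add: "v \<in> VV a (b::'a) \<Longrightarrow> w \<in> VV a b \<Longrightarrow> v + w \<in> VV a b"
  unfolding VV_def by (auto simp: ac_simps)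

lemma cover:
  assumes v: "valid a b" and x: "x \<in> XX g a b"
  shows "x \<in> VV a b \<or> x + 1 \<in> VV a b \<or> x + g \<in> VV a b"
proof (rule ccontr)
  assume "\<not> ?thesis"
  then have n0: "x \<notin> VV a b" and n1: "x + 1 \<notin> VV a b" and ng: "x + g \<notin> VV a b" by auto
  have pt: "x + v \<noteq> 0 \<and> x + v \<noteq> 1 \<and> x + v \<noteq> g" if "v \<in> VV a b" for v
  proof -
    have "x + v \<noteq> 0" using n0 that sum0 by metis
    moreover have "x + v \<noteq> 1" using n1 that move by metis
    moreover have "x + v \<noteq> g" using ng that move by metis
    ultimately show ?thesis by blast
  qed
  have vs: "0 \<in> VV a b" "a \<in> VV a b" "b \<in> VV a b" "a + b \<in> VV a b" unfolding VV_def by auto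
  have e: "sw g (x + v) = x + v" if "v \<in> VV a b" for v using pt[OF that] sw_gen by blast
  have "inverse (x + (a + b)) + inverse (x + a) + inverse (x + b) + inverse x = 0"
    using x unfolding XX_iff using e[OF vs(4)] e[OF vs(2)] e[OF vs(3)] e[OF vs(1)] by simp
  moreover have "inverse x + inverse (x + a) + inverse (x + b) + inverse (x + (x + a) + (x + b)) \<noteq> 0"
  proof (rule quad_none[OF c2])
    show "x \<noteq> 0" "x + a \<noteq> 0" "x + b \<noteq> 0" using pt vs by (metis add.right_neutral)+
    have "x + (x + a) + (x + b) = x + (a + b)" by (simp add: ac_simps)
    then show "x + (x + a) + (x + b) \<noteq> 0" using pt vs by metis
    show "x \<noteq> x + a" "x \<noteq> x + b" "x + a \<noteq> x + b" using v unfolding valid_def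
      by (metis add_left_cancel add.right_neutral)+
  qed
  moreover have "x + (x + a) + (x + b) = x + (a + b)" by (simp add: ac_simps)
  ultimately show False by (simp add: ac_simps)
qed

lemma neqI: "x + y \<noteq> 0 \<Longrightarrow> x \<noteq> (y::'a)" by auto
lemma neqD: "x \<noteq> y \<Longrightarrow> x + y \<noteq> (0::'a)" using sum0 by auto

lemma VV_facts:
  assumes "c \<notin> VV a b"
  shows "c \<noteq> 0" "c \<noteq> a" "c \<noteq> b" "c \<noteq> a + b"
  using assms unfolding VV_def by auto

lemma D0:
  assumes v: "valid a b" and n1: "1 \<notin> VV a b" and ng: "g \<notin> VV a b"
  shows "0 \<in> XX g a b \<longleftrightarrow> a^2+a*b+b^2 = 0"
proof -
  have a0: "a \<noteq> 0" "b \<noteq> 0" "a \<noteq> b" using v unfolding valid_def by auto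
  note f1 = VV_facts[OF n1] and fg = VV_facts[OF ng]
  have ab0: "a + b \<noteq> 0" using a0 neqD by blast
  have s: "sw g (a+b) = a+b" "sw g a = a" "sw g b = b"
    using f1 fg by (auto intro!: sw_gen)
  have "0 \<in> XX g a b \<longleftrightarrow> inverse (a+b) + inverse a + inverse b = 0"
    using s unfolding XX_iff by simp
  also have "\<dots> \<longleftrightarrow> a*b + (a+b)*b + (a+b)*a = 0" by (rule inv3_num) (use a0 ab0 in auto)
  also have "a*b + (a+b)*b + (a+b)*a = (1)*(a^2+a*b+b^2) + 2*(a*b)" by algebra
  finally show ?thesis by simp
qed

lemma D1:
  assumes v: "valid a b" and n1: "1 \<notin> VV a b" and ng: "g \<notin> VV a b" and ng1: "1 + g \<notin> VV a b"
  shows "1 \<in> XX g a b \<longleftrightarrow> a*b*(a+b)+(g+1)*(1+a^2+a*b+b^2) = 0"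
proof -
  have a0: "a \<noteq> 0" "b \<noteq> 0" "a \<noteq> b" using v unfolding valid_def by auto
  note f1 = VV_facts[OF n1] and fg = VV_facts[OF ng] and f1g = VV_facts[OF ng1]
  have nz: "1 + (a+b) \<noteq> 0" "1 + a \<noteq> 0" "1 + b \<noteq> 0"
    using neqD f1 by metis+
  have ne: "1 + (a+b) \<noteq> 1" "1 + a \<noteq> 1" "1 + b \<noteq> 1" "1 + (a+b) \<noteq> g" "1 + a \<noteq> g" "1 + b \<noteq> g"
    using neqD[OF f1g(2)] neqD[OF f1g(3)] neqD[OF f1g(4)] neqD[OF a0(3)] a0
    by - ((rule neqI)?, simp add: ac_simps)+
  have s: "sw g (1+(a+b)) = 1+(a+b)" "sw g (1+a) = 1+a" "sw g (1+b) = 1+b"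
    using ne by (auto intro!: sw_gen)
  have "1 \<in> XX g a b \<longleftrightarrow> inverse (1+(a+b)) + inverse (1+a) + inverse (1+b) + inverse g = 0"
    using s unfolding XX_iff by simp
  also have "\<dots> \<longleftrightarrow> (1+a)*(1+b)*g + (1+(a+b))*(1+b)*g + (1+(a+b))*(1+a)*g + (1+(a+b))*(1+a)*(1+b) = 0"
    by (rule inv4_num) (use nz g0 in auto)
  also have "(1+a)*(1+b)*g + (1+(a+b))*(1+b)*g + (1+(a+b))*(1+a)*g + (1+(a+b))*(1+a)*(1+b) = (1)*(a*b*(a+b)+(g+1)*(1+a^2+a*b+b^2)) + 2*(a + a*b + a*b*g + (2)*a*g + b + (2)*b*g + g)"
    by algebra
  finally show ?thesis by simp
qed

lemma Dg:
  assumes v: "valid a b" and n1: "1 \<notin> VV a b" and ng: "g \<notin> VV a b" and ng1: "1 + g \<notin> VV a b"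
  shows "g \<in> XX g a b \<longleftrightarrow> a*b*(a+b)+(1+g)*(g^2+a^2+a*b+b^2) = 0"
proof -
  have a0: "a \<noteq> 0" "b \<noteq> 0" "a \<noteq> b" using v unfolding valid_def by auto
  note f1 = VV_facts[OF n1] and fg = VV_facts[OF ng] and f1g = VV_facts[OF ng1]
  have nz: "g + (a+b) \<noteq> 0" "g + a \<noteq> 0" "g + b \<noteq> 0"
    using neqD fg by metis+
  have ne: "g + (a+b) \<noteq> 1" "g + a \<noteq> 1" "g + b \<noteq> 1" "g + (a+b) \<noteq> g" "g + a \<noteq> g" "g + b \<noteq> g"
    using neqD[OF f1g(2)] neqD[OF f1g(3)] neqD[OF f1g(4)] neqD[OF a0(3)] a0
    by - ((rule neqI)?, simp add: ac_simps)+
  have s: "sw g (g+(a+b)) = g+(a+b)" "sw g (g+a) = g+a" "sw g (g+b) = g+b"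
    using ne by (auto intro!: sw_gen)
  have "g \<in> XX g a b \<longleftrightarrow> inverse (g+(a+b)) + inverse (g+a) + inverse (g+b) + inverse 1 = 0"
    using s unfolding XX_iff by simp
  also have "\<dots> \<longleftrightarrow> (g+a)*(g+b)*1 + (g+(a+b))*(g+b)*1 + (g+(a+b))*(g+a)*1 + (g+(a+b))*(g+a)*(g+b) = 0"
    by (rule inv4_num) (use nz in auto)
  also have "(g+a)*(g+b)*1 + (g+(a+b))*(g+b)*1 + (g+(a+b))*(g+a)*1 + (g+(a+b))*(g+a)*(g+b) = (1)*(a*b*(a+b)+(1+g)*(g^2+a^2+a*b+b^2)) + 2*(a*b + a*b*g + (2)*a*g + a*g^2 + (2)*b*g + b*g^2 + g^2)"
    by algebra
  finally show ?thesis by simp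
qed
lemma Q1:
  assumes v: "valid (1+g) b" and n1: "1 \<notin> VV (1+g) b"
  shows "1 \<notin> XX g (1+g) b"
proof
  assume mem: "1 \<in> XX g (1+g) b"
  have b0: "b \<noteq> 0" and b1g: "b \<noteq> 1 + g" using v unfolding valid_def by auto
  have b1: "b \<noteq> 1" using n1 unfolding VV_def by auto
  have bg: "b \<noteq> g"
  proof
    assume "b = g" then have "1 + g + b = 1" by simp
    then show False using n1 unfolding VV_def by auto
  qed
  have p1: "1 + ((1+g)+b) = g + b" by (simp add: ac_simps)
  have p2: "1 + (1+g) = g" by simp
  have gb0: "g + b \<noteq> 0" using bg sum0 by (metis add.commute)
  have s1: "sw g (g+b) = g+b"
    using b0 b1g gb0 move by (intro sw_gen) (metis add.commute add.right_neutral)+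
  have b10: "1 + b \<noteq> 0" using b1 sum0 by metis
  have s3: "sw g (1+b) = 1+b"
    using b0 b1g move by (intro sw_gen) (metis add.commute add.right_neutral)+
  have E: "inverse (g+b) + inverse 1 + inverse (1+b) + inverse g = 0"
    using mem unfolding XX_iff p1 p2 s1 s3 sw_1 sw_g by simp
  have N: "1*(1+b)*g + (g+b)*(1+b)*g + (g+b)*1*g + (g+b)*1*(1+b) = 0"
    by (rule inv4_imp[OF gb0 _ b10 g0 E]) simp
  have "1*(1+b)*g + (g+b)*(1+b)*g + (g+b)*1*g + (g+b)*1*(1+b) = (1+g)*b*(b+1+g) + 2*(b*g + g + g^2)"
    by algebra
  with N have "(1+g)*b*(b+1+g) = 0" by simp
  moreover have "b + 1 + g \<noteq> 0" using b1g sum0 by (metis add.assoc)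
  ultimately show False using one_plus_g b0 by simp
qed

lemma B0:
  assumes v: "valid 1 b" and ng: "g \<notin> VV 1 b"
  shows "0 \<in> XX g 1 b \<longleftrightarrow> b^2+b+g = 0"
proof -
  have a0: "b \<noteq> 0" "b \<noteq> 1" using v unfolding valid_def by auto
  note fg = VV_facts[OF ng]
  have nz: "1 + b \<noteq> 0" using neqD a0 by metis
  have ne: "1 + b \<noteq> 1" "1 + b \<noteq> g"
    using neqD[OF fg(4)] a0 by - ((rule neqI)?, simp add: ac_simps)+
  have s: "sw g (1+b) = 1+b" "sw g b = b"
    using ne fg a0 by (auto intro!: sw_gen)
  have "0 \<in> XX g 1 b \<longleftrightarrow> inverse (1+b) + inverse g + inverse b = 0"
    using s unfolding XX_iff by simp
  also have "\<dots> \<longleftrightarrow> g*b + (1+b)*b + (1+b)*g = 0" by (rule inv3_num) (use a0 nz g0 in auto)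
  also have "g*b + (1+b)*b + (1+b)*g = (1)*(b^2+b+g) + 2*(b*g)" by algebra
  finally show ?thesis by simp
qed

lemma Bg:
  assumes v: "valid 1 b" and ng: "g \<notin> VV 1 b" and h: "b^2+b+g = 0"
  shows "g \<in> XX g 1 b \<longleftrightarrow> g^3+g+1 = 0"
proof -
  have a0: "b \<noteq> 0" "b \<noteq> 1" using v unfolding valid_def by auto
  note fg = VV_facts[OF ng]
  have nz: "g + (1+b) \<noteq> 0" "g + 1 \<noteq> 0" "g + b \<noteq> 0"
    using neqD fg one_plus_g by metis+
  have ne: "g + (1+b) \<noteq> 1" "g + (1+b) \<noteq> g" "g + 1 \<noteq> 1" "g + 1 \<noteq> g" "g + b \<noteq> 1" "g + b \<noteq> g"
    using neqD[OF fg(3)] neqD[OF fg(4)] neqD[OF a0(2)] a0 g0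
    by - ((rule neqI)?, simp add: ac_simps)+
  have s: "sw g (g+(1+b)) = g+(1+b)" "sw g (g+1) = g+1" "sw g (g+b) = g+b"
    using ne by (auto intro!: sw_gen)
  have "g \<in> XX g 1 b \<longleftrightarrow> inverse (g+(1+b)) + inverse (g+1) + inverse (g+b) + inverse 1 = 0"
    using s unfolding XX_iff by simp
  also have "\<dots> \<longleftrightarrow> (g+1)*(g+b)*1 + (g+(1+b))*(g+b)*1 + (g+(1+b))*(g+1)*1 + (g+(1+b))*(g+1)*(g+b) = 0"
    by (rule inv4_num) (use nz in auto)
  also have "(g+1)*(g+b)*1 + (g+(1+b))*(g+b)*1 + (g+(1+b))*(g+1)*1 + (g+(1+b))*(g+1)*(g+b) = (g)*(b^2+b+g) + (1)*(g^3+g+1) + 2*((2)*b + (3)*b*g + b*g^2 + b^2 + (2)*g + (2)*g^2)"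
    by algebra
  finally show ?thesis using h by simp
qed

lemma C0:
  assumes v: "valid g b" and n1: "1 \<notin> VV g b"
  shows "0 \<in> XX g g b \<longleftrightarrow> b^2+g*b+g = 0"
proof -
  have a0: "b \<noteq> 0" "g \<noteq> b" using v unfolding valid_def by auto
  note f1 = VV_facts[OF n1]
  have nz: "g + b \<noteq> 0" using neqD a0 by metis
  have ne: "g + b \<noteq> 1" "g + b \<noteq> g"
    using neqD[OF f1(4)] a0 by - ((rule neqI)?, simp add: ac_simps)+
  have s: "sw g (g+b) = g+b" "sw g b = b"
    using ne f1 a0 by (auto intro!: sw_gen)
  have "0 \<in> XX g g b \<longleftrightarrow> inverse (g+b) + inverse 1 + inverse b = 0"
    using s unfolding XX_iff by simp
  also have "\<dots> \<longleftrightarrow> 1*b + (g+b)*b + (g+b)*1 = 0" by (rule inv3_num) (use a0 nz in auto)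
  also have "1*b + (g+b)*b + (g+b)*1 = (1)*(b^2+g*b+g) + 2*(b)" by algebra
  finally show ?thesis by simp
qed

lemma C1:
  assumes v: "valid g b" and n1: "1 \<notin> VV g b" and h: "b^2+g*b+g = 0"
  shows "1 \<in> XX g g b \<longleftrightarrow> g^3+g^2+1 = 0"
proof -
  have a0: "b \<noteq> 0" "g \<noteq> b" using v unfolding valid_def by auto
  note f1 = VV_facts[OF n1]
  have nz: "1 + (g+b) \<noteq> 0" "1 + g \<noteq> 0" "1 + b \<noteq> 0"
    using neqD f1 one_plus_g by metis+
  have ne: "1 + (g+b) \<noteq> 1" "1 + (g+b) \<noteq> g" "1 + g \<noteq> 1" "1 + g \<noteq> g" "1 + b \<noteq> 1" "1 + b \<noteq> g"
    using neqD[OF f1(3)] neqD[OF f1(4)] neqD[OF a0(2)] a0 g0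
    by - ((rule neqI)?, simp add: ac_simps)+
  have s: "sw g (1+(g+b)) = 1+(g+b)" "sw g (1+g) = 1+g" "sw g (1+b) = 1+b"
    using ne by (auto intro!: sw_gen)
  have "1 \<in> XX g g b \<longleftrightarrow> inverse (1+(g+b)) + inverse (1+g) + inverse (1+b) + inverse g = 0"
    using s unfolding XX_iff by simp
  also have "\<dots> \<longleftrightarrow> (1+g)*(1+b)*g + (1+(g+b))*(1+b)*g + (1+(g+b))*(1+g)*g + (1+(g+b))*(1+g)*(1+b) = 0"
    by (rule inv4_num) (use nz g0 in auto)
  also have "(1+g)*(1+b)*g + (1+(g+b))*(1+b)*g + (1+(g+b))*(1+g)*g + (1+(g+b))*(1+g)*(1+b) = (1)*(b^2+g*b+g) + (1)*(g^3+g^2+1) + 2*(b + (3)*b*g + (2)*b*g^2 + b^2*g + (2)*g + (2)*g^2)"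
    by algebra
  finally show ?thesis using h by simp
qed

lemma DPQ:
  assumes v: "valid a b" and n1: "1 \<notin> VV a b" and ng: "g \<notin> VV a b" and ng1: "1 + g \<notin> VV a b"
    and m1: "1 \<in> XX g a b" and mg: "g \<in> XX g a b"
  shows False
proof -
  have h1: "a*b*(a+b)+(g+1)*(1+a^2+a*b+b^2) = 0" using D1[OF v n1 ng ng1] m1 by simp
  have h2: "a*b*(a+b)+(1+g)*(g^2+a^2+a*b+b^2) = 0" using Dg[OF v n1 ng ng1] mg by simp
  have "(g+1)^3 = (1)*(a*b*(a+b)+(g+1)*(1+a^2+a*b+b^2)) + (-1)*(a*b*(a+b)+(1+g)*(g^2+a^2+a*b+b^2)) + 2*(g + (2)*g^2 + g^3)"
    by algebra
  then have "(g+1)^3 = 0" using h1 h2 by simp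
  then show False using one_plus_g by simp
qed

lemma cube_A:
  assumes "a^2+a*b+b^2 = 0" shows "a^3 = a*b*(a+(b::'a))"
proof -
  have "a^3 = (a)*(a^2+a*b+b^2) + (1)*(a*b*(a+b)) + 2*((-1)*a*b^2 + (-1)*a^2*b)" by algebra
  then show ?thesis using assms by simp
qed

lemma cube_ne1:
  assumes v: "valid a b" and A: "a^2+a*b+b^2 = 0" and n1: "1 \<notin> VV a b"
  shows "a^3 \<noteq> (1::'a)"
proof
  assume c: "a^3 = 1"
  note f1 = VV_facts[OF n1]
  have "(a+1)*(a^2+a+1) = (1)*(a^3+1) + 2*(a + a^2)" by algebra
  then have "(a+1)*(a^2+a+1) = 0" using c by simp
  moreover have "a + 1 \<noteq> 0" using f1 neqD by metis
  ultimately have h: "a^2+a+1 = 0" by simp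
  have "(b+1)*(b+a+1) = (1)*(a^2+a*b+b^2) + (1)*(a^2+a+1) + 2*((-1)*a^2 + b)" by algebra
  then have "(b+1)*(b+a+1) = 0" using h A by simp
  moreover have "b + 1 \<noteq> 0" using f1 neqD by metis
  moreover have "b + a + 1 \<noteq> 0" using neqD[OF f1(4)] by (simp add: ac_simps)
  ultimately show False by simp
qed

lemma omega_of_A:
  assumes "a \<noteq> 0" "a^2+a*b+b^2 = 0" shows "(b/a)^2 + b/a + 1 = (0::'a)"
proof -
  have "(b/a)^2 + b/a + 1 = (a^2+a*b+b^2) / a^2" using assms(1) by (simp add: field_simps power2_eq_square)
  then show ?thesis using assms by simp
qed
end

lemma c2_sum_sq:
  assumes c2: "(2::'a::field) = 0"
  shows "(\<Sum>i<(k::nat). f i)^2 = (\<Sum>i<k. (f i)^2 :: 'a)"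
proof (induction k)
  case 0 then show ?case by simp
next
  case (Suc k)
  have "(\<Sum>i<Suc k. f i)^2 = (\<Sum>i<k. f i)^2 + (f k)^2 + 2 * ((\<Sum>i<k. f i) * f k)"
    by (simp add: power2_sum)
  then show ?case using Suc c2 by simp
qed

lemma four_pow_mod3: "\<exists>k. (4::nat)^m = 3*k+1"
proof (induction m)
  case 0 then show ?case by simp
next
  case (Suc m)
  then obtain k where "(4::nat)^m = 3*k+1" by blast
  then have "(4::nat)^Suc m = 3*(4*k+1)+1" by simp
  then show ?case by blast
qed

lemma eight_pow_mod7: "\<exists>k. (8::nat)^m = 7*k+1"
proof (induction m)
  case 0 then show ?case by simp
next
  case (Suc m)
  then obtain k where "(8::nat)^m = 7*k+1" by blast
  then have "(8::nat)^Suc m = 7*(8*k+1)+1" by simp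
  then show ?case by blast
qed

locale L3 = L2 g for g :: "'a::{field,finite}" +
  fixes n :: nat
  assumes card: "card (UNIV::'a set) = 2^n" and npos: "n > 0"
begin

lemma frob: "x ^ (2^n) = (x::'a)"
  using fermat_ff[of x] card by simp

lemma cube_of_omega: "w^2+w+1 = 0 \<Longrightarrow> w^3 = (1::'a)"
proof -
  assume h: "w^2+w+1 = 0"
  have "w^3 = (w+1)*(w^2+w+1) + (1)*(1) + 2*((-1) + (-1)*w + (-1)*w^2)" by algebra
  then show ?thesis using h by simp
qed

lemma omega_even:
  assumes h: "w^2+w+1 = (0::'a)" shows "even n"
proof (rule ccontr)
  assume "odd n"
  then obtain m where m: "n = 2*m+1" by (metis oddE)
  obtain k where k: "(4::nat)^m = 3*k+1" using four_pow_mod3 by blast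
  have e: "(2::nat)^n = 3*(2*k) + 2" using m k by (simp add: power_mult power_add)
  have "w ^ (2^n) = w^(3*(2*k) + 2)" by (simp only: e)
  also have "\<dots> = (w^3)^(2*k) * w^2" by (simp only: power_add power_mult)
  also have "\<dots> = w^2" using cube_of_omega[OF h] by simp
  finally have "w^2 = w" using frob by simp
  then have "w * (w - 1) = 0" by (simp add: algebra_simps power2_eq_square)
  then have "w = 0 \<or> w = 1" by auto
  then show False using h by auto
qed

lemma cubic_7:
  assumes "g^3+g+1 = 0 \<or> g^3+g^2+1 = 0" shows "g^7 = 1"
  using assms
proof
  assume h: "g^3+g+1 = 0"
  have "g^7 = (g^4+g^2+g+1)*(g^3+g+1) + (1)*(1) + 2*((-1) + (-1)*g + (-1)*g^2 + (-1)*g^3 + (-1)*g^4 + (-1)*g^5)" by algebra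
  then show ?thesis using h by simp
next
  assume h: "g^3+g^2+1 = 0"
  have "g^7 = ((1 + g^2 + g^3 + g^4))*(g^3+g^2+1) + (1)*(1) + 2*((-1) + (-1)*g^2 + (-1)*g^3 + (-1)*g^4 + (-1)*g^5 + (-1)*g^6)" by algebra
  then show ?thesis using h by simp
qed

lemma cubic_cond:
  assumes h: "g^3+g+1 = 0 \<or> g^3+g^2+1 = 0"
  shows "3 dvd n \<and> g^8 = g \<and> g^2 \<noteq> g"
proof (intro conjI)
  have g7: "g^7 = 1" by (rule cubic_7[OF h])
  have "g^8 = g^(7+1)" by simp
  also have "g^(7+1) = g^7 * g" by (simp only: power_add power_one_right)
  finally have "g^8 = g^7 * g" .
  then show "g^8 = g" using g7 by simp
  show g2: "g^2 \<noteq> g"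
  proof
    assume "g^2 = g" then have "g * (g - 1) = 0" by (simp add: algebra_simps power2_eq_square)
    then show False using g0 g1 by auto
  qed
  show "3 dvd n"
  proof (rule ccontr)
    assume nd: "\<not> 3 dvd n"
    define m where "m = n div 3"
    define r where "r = n mod 3"
    have mr: "n = 3*m + r" "r = 1 \<or> r = 2"
      using nd unfolding m_def r_def by (simp, presburger)
    obtain k where k: "(8::nat)^m = 7*k+1" using eight_pow_mod7 by blast
    have p8: "(2::nat)^(3*m) = 8^m" by (simp add: power_mult)
    have "(2::nat)^n = 2^r * 2^(3*m)" using mr(1) by (simp add: power_add)
    also have "\<dots> = 2^r * (7*k+1)" using p8 k by simp
    finally have e2: "(2::nat)^n = 7*(k*2^r) + 2^r" by (simp add: algebra_simps)
    have "g^(2^n) = g^(7*(k*2^r) + 2^r)" by (simp only: e2)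
    also have "\<dots> = (g^7)^(k*2^r) * g^(2^r)" by (simp only: power_add power_mult)
    finally have "g^(2^n) = (g^7)^(k*2^r) * g^(2^r)" .
    then have e: "g = g^(2^r)" using g7 frob by simp
    from mr(2) show False
    proof
      assume "r = 1" then show False using e g2 by simp
    next
      assume "r = 2"
      then have "g^4 = g" using e by simp
      moreover have "g^4 = g * g^3" by (simp add: power_Suc[symmetric])
      ultimately have "g * g^3 = g * 1" by simp
      then have "g^3 = 1" using g0 by (metis mult_left_cancel)
      then show False using h g0 c2 by auto
    qed
  qed
qed

lemma F8_cubic:
  assumes "g^8 = g" shows "g^3+g+1 = 0 \<or> g^3+g^2+1 = 0"
proof -
  have "g^8 = (g*(g+1))*((g^3+g+1)*(g^3+g^2+1)) + (1)*(g) + 2*((-1)*g + (-1)*g^2 + (-1)*g^3 + (-2)*g^4 + (-2)*g^5 + (-1)*g^6 + (-1)*g^7)"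
    by algebra
  then have "(g*(g+1))*((g^3+g+1)*(g^3+g^2+1)) = 0" using assms by simp
  then show ?thesis using g0 one_plus_g by auto
qed

lemma even_omega:
  assumes ev: "even n" shows "\<exists>w. w^2+w+1 = (0::'a)"
proof (rule ccontr)
  assume no: "\<not> ?thesis"
  obtain m where m: "n = 2*m" using ev by blast
  obtain k where k: "(4::nat)^m = 3*k+1" using four_pow_mod3 by blast
  have N: "card (UNIV::'a set) = 3*k+1" using card m k by (simp add: power_mult)
  have "m \<ge> 1" using m npos by simp
  then have "(4::nat)^m \<ge> 4^1" by (intro power_increasing) auto
  then have k1: "k \<ge> 1" using k by simp
  have roots: "y^k = 1" if "y \<noteq> 0" for y :: 'a
  proof -
    have "y^(3*k+1) = y" using fermat_ff[of y] N by simp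
    then have "y^(3*k) * y = 1 * y" by (simp add: power_add)
    then have "y^(3*k) = 1" using that by (metis mult_right_cancel)
    then have z3: "(y^k)^3 = 1" by (simp add: power_mult[symmetric] mult.commute)
    have "(y^k+1)*((y^k)^2+y^k+1) = (1)*((y^k)^3+1) + 2*(y^k+(y^k)^2)" by algebra
    then have "(y^k+1)*((y^k)^2+y^k+1) = 0" using z3 by simp
    moreover have "(y^k)^2+y^k+1 \<noteq> 0" using no by blast
    ultimately have "y^k + 1 = 0" by simp
    then show ?thesis using sum0 by simp
  qed
  define p :: "'a poly" where "p = monom 1 k - 1"
  have pv: "poly p x = x^k - 1" for x unfolding p_def by (simp add: poly_monom)
  have "p \<noteq> 0"
  proof
    assume "p = 0" then have "poly p 0 = 0" by simp
    then show False using pv[of 0] k1 by (simp add: power_0_left)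
  qed
  then have "card {x. poly p x = 0} \<le> degree p" by (rule card_poly_roots_bound)
  also have "degree p \<le> k" unfolding p_def by (rule degree_diff_le) (auto simp: degree_monom_le)
  finally have c1: "card {x. poly p x = 0} \<le> k" .
  have "UNIV - {0} \<subseteq> {x. poly p x = 0}" using roots pv by auto
  then have "card (UNIV - {0::'a}) \<le> card {x. poly p x = 0}" by (intro card_mono) auto
  moreover have "card (UNIV - {0::'a}) = 3*k" using N by (simp add: card_Diff_singleton)
  ultimately show False using c1 k1 by simp
qed

lemma odd_H:
  assumes od: "odd n" shows "\<exists>y. y^2+y = c \<or> y^2+y = c+(1::'a)"
proof -
  obtain m where m: "n = 2*m+1" using od by (metis oddE)
  define Y where "Y j = (\<Sum>i<Suc j. c^(4^i))" for j
  have YS: "(Y j)^2 + Y j = (\<Sum>i<2*j+2. c^(2^i))" for j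
  proof (induction j)
    case 0 then show ?case by (simp add: Y_def numeral_2_eq_2)
  next
    case (Suc j)
    have "(2::nat)^(2*j+2) = 2^(2*(Suc j))" by simp
    also have "\<dots> = 4^(Suc j)" by (simp only: power_mult) simp
    finally have e1: "(4::nat)^(Suc j) = 2^(2*j+2)" by simp
    have e2: "(c^(4^(Suc j)))^2 = c^(2^(2*j+3))"
      by (simp only: e1 power_mult[symmetric]) (simp add: power_add mult.commute)
    define t where "t = c^(4^(Suc j))"
    have ht: "t = c^(2^(2*j+2))" unfolding t_def by (simp only: e1)
    have "Y (Suc j) = Y j + t" by (simp add: Y_def t_def)
    moreover have "(Y j + t)^2 + (Y j + t) = ((Y j)^2 + Y j) + t + t^2 + 2*(Y j*t)"
      by (simp add: power2_sum algebra_simps)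
    ultimately have "(Y (Suc j))^2 + Y (Suc j) = ((Y j)^2 + Y j) + c^(2^(2*j+2)) + (c^(4^(Suc j)))^2"
      using ht t_def by simp
    also have "\<dots> = (\<Sum>i<2*j+2. c^(2^i)) + c^(2^(2*j+2)) + c^(2^(2*j+3))" using Suc e2 by simp
    also have "\<dots> = (\<Sum>i<2*(Suc j)+2. c^(2^i))"
      by (simp add: numeral_3_eq_3 numeral_2_eq_2)
    finally show ?case .
  qed
  define T where "T = (\<Sum>i<n. c^(2^i))"
  have "(\<Sum>i<Suc n. c^(2^i)) = c^(2^0) + (\<Sum>i<n. c^(2^(Suc i)))"
    by (rule sum.lessThan_Suc_shift)
  also have "(\<Sum>i<n. c^(2^(Suc i))) = (\<Sum>i<n. (c^(2^i))^2)"
    by (simp add: power_mult[symmetric] mult.commute)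
  also have "\<dots> = T^2" unfolding T_def by (rule c2_sum_sq[OF c2, symmetric])
  finally have t1: "(\<Sum>i<Suc n. c^(2^i)) = c + T^2" by simp
  have t2: "(\<Sum>i<Suc n. c^(2^i)) = T + c" unfolding T_def using frob[of c] by simp
  have "T^2 = T" using t1 t2 by (simp add: add.commute)
  then have "T * (T - 1) = 0" by (simp add: algebra_simps power2_eq_square)
  then have T01: "T = 0 \<or> T = 1" by auto
  have "(Y m)^2 + Y m = T + c" using YS[of m] t2 m by simp
  then show ?thesis using T01 by (auto simp: add.commute)
qed

lemma W_F4:
  assumes h: "g^2+g+1 = 0" shows "0 \<in> XX g 1 g"
proof -
  have ne: "1 + g \<noteq> 1" "1 + g \<noteq> g" using g0 by - ((rule neqI)?, simp add: ac_simps)+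
  have s: "sw g (1+g) = 1+g" using ne by (auto intro!: sw_gen)
  have N: "g*1 + (1+g)*1 + (1+g)*g = 0"
  proof -
    have "g*1 + (1+g)*1 + (1+g)*g = (1)*(g^2+g+1) + 2*(g)" by algebra
    then show ?thesis using h by simp
  qed
  have "inverse (1+g) + inverse g + inverse 1 = 0"
    by (rule inv3_rev[OF one_plus_g(1) g0 _ N]) simp
  then show ?thesis using s unfolding XX_iff by simp
qed

lemma gw:
  assumes w: "w^2+w+1 = 0" and h: "g^2+g+1 \<noteq> 0"
  shows "(g+1)*w \<noteq> 0" "(g+1)*w \<noteq> 1" "(g+1)*w \<noteq> g"
proof -
  have cert: "g^2+g+1 = ((g+1)^2)*(w^2+w+1) + ((g+1)*w+g)*((g+1)*w+1) + 2*((-1)*g + (-2)*g*w + (-2)*g*w^2 + (-1)*g^2*w + (-1)*g^2*w^2 + (-1)*w + (-1)*w^2)"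
    by algebra
  show "(g+1)*w \<noteq> 1"
  proof
    assume "(g+1)*w = 1" then have "(g+1)*w+1 = 0" by simp
    then show False using cert w h by simp
  qed
  show "(g+1)*w \<noteq> g"
  proof
    assume "(g+1)*w = g" then have "(g+1)*w+g = 0" by simp
    then show False using cert w h by simp
  qed
  show "(g+1)*w \<noteq> 0"
  proof
    assume "(g+1)*w = 0" then have "w = 0" using one_plus_g by simp
    then show False using w by simp
  qed
qed

lemma W_even:
  assumes ev: "even n" shows "\<exists>a b. valid a b \<and> 0 \<in> XX g a b"
proof (cases "g^2+g+1 = 0")
  case True
  have "valid 1 g" unfolding valid_def using g0 g1 by auto
  then show ?thesis using W_F4[OF True] by blast
next
  case False
  obtain w :: 'a where w: "w^2+w+1 = 0" using even_omega[OF ev] by blast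
  have w1: "(w+1)^2+(w+1)+1 = 0"
  proof -
    have "(w+1)^2+(w+1)+1 = (1)*(w^2+w+1) + 2*(w+1)" by algebra
    then show ?thesis using w by simp
  qed
  note G1 = gw[OF w False] and G2 = gw[OF w1 False]
  have ab: "(g+1) + (g+1)*w = (g+1)*(w+1)" by algebra
  have w_ne1: "w \<noteq> 1" using w by auto
  have v: "valid (g+1) ((g+1)*w)" unfolding valid_def
  proof (intro conjI)
    show "g + 1 \<noteq> 0" by (rule one_plus_g(2))
    show "(g+1)*w \<noteq> 0" by (rule G1(1))
    show "g + 1 \<noteq> (g+1)*w"
    proof
      assume "g + 1 = (g+1)*w" then have "(g+1)*1 = (g+1)*w" by simp
      then show False using one_plus_g w_ne1 by (metis mult_left_cancel)
    qed
  qed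
  have n1: "1 \<notin> VV (g+1) ((g+1)*w)"
  proof -
    have "(1::'a) \<noteq> g + 1" using g0 by - ((rule neqI)?, simp add: ac_simps)
    then show ?thesis unfolding VV_def ab using G1 G2 by auto
  qed
  have ng: "g \<notin> VV (g+1) ((g+1)*w)"
  proof -
    have "g \<noteq> g + 1" by - ((rule neqI)?, simp add: ac_simps)
    then show ?thesis unfolding VV_def ab using G1 G2 g0 by auto
  qed
  have "(g+1)^2+(g+1)*((g+1)*w)+((g+1)*w)^2 = ((g+1)^2)*(w^2+w+1) + 2*0" by algebra
  then have "(g+1)^2+(g+1)*((g+1)*w)+((g+1)*w)^2 = 0" using w by simp
  then have "0 \<in> XX g (g+1) ((g+1)*w)" using D0[OF v n1 ng] by simp
  then show ?thesis using v by blast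
qed

lemma W_odd:
  assumes od: "odd n" shows "\<exists>a b p. valid a b \<and> p \<in> XX g a b"
proof -
  obtain y where y: "y^2+y = inverse g \<or> y^2+y = inverse g + 1" using odd_H[OF od] by blast
  then show ?thesis
  proof
    assume hy: "y^2+y = inverse g"
    define u where "u = g*y"
    have hu: "u^2 + g*u = g"
    proof -
      have "u^2 + g*u = g^2*(y^2+y)" unfolding u_def by (simp add: algebra_simps power2_eq_square)
      also have "\<dots> = g" using hy g0 by (simp add: power2_eq_square)
      finally show ?thesis .
    qed
    have u0: "u \<noteq> 0" using hu g0 by auto
    have ug: "g \<noteq> u"
    proof
      assume "g = u" then have "u^2 + g*u = 0" by (simp add: power2_eq_square)
      then show False using hu g0 by simp
    qed
    have u1: "1 \<noteq> u"
    proof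
      assume "1 = u" then have "1 + g = g" using hu by simp
      then show False by simp
    qed
    have ug1: "1 \<noteq> g + u"
    proof
      assume "1 = g + u" then have uu: "u = 1 + g" by (metis move add.commute)
      have "(1+g)^2+g*(1+g) = (1)*(1+g) + 2*(g + g^2)" by algebra
      then have "1 + g = g" using hu uu by simp
      then show False by simp
    qed
    have v: "valid g u" unfolding valid_def using g0 u0 ug by auto
    have n1: "1 \<notin> VV g u" unfolding VV_def using g1 u1 ug1 by auto
    have "u^2 + g*u + g = 0" using hu by simp
    then have "0 \<in> XX g g u" using C0[OF v n1] by simp
    then show ?thesis using v by blast
  next
    assume hy: "y^2+y = inverse g + 1"
    have h: "g*y^2+g*y+1+g = 0"
    proof -
      have "g*y^2+g*y = g*(y^2+y)" by (simp add: algebra_simps)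
      also have "\<dots> = 1 + g" using hy g0 by (simp add: algebra_simps)
      finally show ?thesis by (simp add: add.assoc)
    qed
    have y0: "y \<noteq> 0" using h one_plus_g by (auto simp: add.commute)
    have y1: "y \<noteq> 1"
    proof
      assume "y = 1" then have "g*y^2+g*y+1+g = 1 + g" by simp
      then show False using h one_plus_g by simp
    qed
    have cube: "g*y^2+g*y+1+g = (g+1)^3" if "y = g \<or> y = g + 1"
    proof -
      have "g*g^2+g*g+1+g = (1)*((g+1)^3) + 2*((-1)*g + (-1)*g^2)" by algebra
      moreover have "g*(g+1)^2+g*(g+1)+1+g = (1)*((g+1)^3) + 2*0" by algebra
      ultimately show ?thesis using that by auto
    qed
    have yg: "y \<noteq> g" "y \<noteq> g + 1"
      using cube h one_plus_g by auto
    have p1: "g + (1 + (y + g)) = 1 + y" by (simp add: ac_simps)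
    have p3: "g + (y + g) = y" by (simp add: ac_simps)
    have ne: "1 + y \<noteq> 1" "1 + y \<noteq> g" "1 + y \<noteq> 0"
      using y0 neqD[OF yg(2)] y1 neqD[OF y1] by - ((rule neqI)?, simp add: ac_simps)+
    have s: "sw g (1+y) = 1+y" "sw g (g+1) = g+1" "sw g y = y"
    proof -
      show "sw g (1+y) = 1+y" using ne by (auto intro!: sw_gen)
      have "g + 1 \<noteq> 1" "g + 1 \<noteq> g" using g0 by - ((rule neqI)?, simp add: ac_simps)+
      then show "sw g (g+1) = g+1" by (auto intro!: sw_gen)
      show "sw g y = y" using y1 yg by (auto intro!: sw_gen)
    qed
    have N: "(g+1)*y*1 + (1+y)*y*1 + (1+y)*(g+1)*1 + (1+y)*(g+1)*y = 0"
    proof -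
      have "(g+1)*y*1 + (1+y)*y*1 + (1+y)*(g+1)*1 + (1+y)*(g+1)*y = (1)*(g*y^2+g*y+1+g) + 2*(g*y + (2)*y + y^2)"
        by algebra
      then show ?thesis using h by simp
    qed
    have "inverse (1+y) + inverse (g+1) + inverse y + inverse 1 = 0"
      by (rule inv4_rev[OF ne(3) one_plus_g(2) y0 _ N]) simp
    then have "g \<in> XX g 1 (y+g)" unfolding XX_iff p1 p3 s sw_g .
    moreover have "valid 1 (y+g)" unfolding valid_def
      using neqD[OF yg(1)] yg(2) by (auto simp: move)
    ultimately show ?thesis by blast
  qed
qed

definition condn :: bool where
  "condn \<longleftrightarrow> (even n \<and> {g ^ 3 + g ^ 2, g + 1} \<inter> cubes_C \<noteq> {}) \<or> (3 dvd n \<and> g ^ 8 = g \<and> g ^ 2 \<noteq> g)"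

lemma g2_ne_g: "g^2 \<noteq> g"
proof
  assume "g^2 = g" then have "g * g = g * 1" by (simp add: power2_eq_square)
  then show False using g0 g1 by (metis mult_left_cancel)
qed

lemma g2_ne_1: "g^2 \<noteq> 1"
proof
  assume h: "g^2 = 1"
  have "(1+g)^2 = (1)*(1+g^2) + 2*(g)" by algebra
  then have "(1+g)^2 = 0" using h by simp
  then show False using one_plus_g by simp
qed

lemma W3:
  assumes h: "g^3+g+1 = 0"
  shows "\<exists>a b p q. valid a b \<and> p \<in> XX g a b \<and> q \<in> XX g a b \<and> p + q \<notin> VV a b"
proof -
  have v: "valid 1 (g^2)" unfolding valid_def using g2_ne_1 g0 by auto
  have gg: "g^2+g+1 \<noteq> 0"
  proof
    assume h2: "g^2+g+1 = 0"
    have "g^2+1 = (1)*(g^3+g+1) + (-g)*(g^2+g+1) + 2*(g^2)" by algebra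
    then have "g^2 + 1 = 0" using h h2 by simp
    then show False using g2_ne_1 sum0 by simp
  qed
  have ng: "g \<notin> VV 1 (g^2)"
  proof -
    have "g \<noteq> 1 + g^2"
    proof
      assume "g = 1 + g^2" then have "g^2+g+1 = 0" by (metis add.commute move self)
      then show False using gg by simp
    qed
    then show ?thesis unfolding VV_def using g0 g1 g2_ne_g by auto
  qed
  have b: "(g^2)^2+g^2+g = 0"
  proof -
    have "(g^2)^2+g^2+g = (g)*(g^3+g+1) + 2*0" by algebra
    then show ?thesis using h by simp
  qed
  have "0 \<in> XX g 1 (g^2)" using B0[OF v ng] b by simp
  moreover have "g \<in> XX g 1 (g^2)" using Bg[OF v ng b] h by simp
  moreover have "0 + g \<notin> VV 1 (g^2)" using ng by simp
  ultimately show ?thesis using v by blast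
qed

lemma W4:
  assumes h: "g^3+g^2+1 = 0"
  shows "\<exists>a b p q. valid a b \<and> p \<in> XX g a b \<and> q \<in> XX g a b \<and> p + q \<notin> VV a b"
proof -
  have v: "valid g (g^2)" unfolding valid_def using g2_ne_g g0 by auto
  have n1: "1 \<notin> VV g (g^2)"
  proof -
    have "1 \<noteq> g + g^2"
    proof
      assume "1 = g + g^2" then have h2: "g^2+g+1 = 0" by (metis add.commute move self)
      have "g+1 = (1)*(g^3+g^2+1) + (-g)*(g^2+g+1) + 2*(g)" by algebra
      then have "g + 1 = 0" using h h2 by simp
      then show False using one_plus_g by simp
    qed
    then show ?thesis unfolding VV_def using g1 g2_ne_1 by auto
  qed
  have b: "(g^2)^2+g*g^2+g = 0"
  proof -
    have "(g^2)^2+g*g^2+g = (g)*(g^3+g^2+1) + 2*0" by algebra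
    then show ?thesis using h by simp
  qed
  have "0 \<in> XX g g (g^2)" using C0[OF v n1] b by simp
  moreover have "1 \<in> XX g g (g^2)" using C1[OF v n1 b] h by simp
  moreover have "0 + 1 \<notin> VV g (g^2)" using n1 by simp
  ultimately show ?thesis using v by blast
qed

lemma omega_basic:
  assumes w: "w^2+w+1 = (0::'a)"
  shows "w \<noteq> 0" "w \<noteq> 1"
  using w by auto

lemma omega_facts:
  assumes w: "w^2+w+1 = (0::'a)"
  shows "(al*w)^3 = al^3" "(al+al*w)^3 = al^3"
    "al^2+al*(al*w)+(al*w)^2 = 0"
proof -
  have w3: "w^3 = 1" by (rule cube_of_omega[OF w])
  show "(al*w)^3 = al^3" using w3 by (simp add: power_mult_distrib)
  have "(al+al*w)^3 = (al^3*w)*(w^2+w+1) + (al^3)*(1) + 2*(al^3*w + al^3*w^2)" by algebra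
  then show "(al+al*w)^3 = al^3" using w by simp
  have "al^2+al*(al*w)+(al*w)^2 = (al^2)*(w^2+w+1) + 2*0" by algebra
  then show "al^2+al*(al*w)+(al*w)^2 = 0" using w by simp
qed

lemma VV_cubes:
  assumes w: "w^2+w+1 = (0::'a)" and v: "v \<in> VV al (al*w)"
  shows "v = 0 \<or> v^3 = al^3"
  using v omega_facts[OF w, of al] unfolding VV_def by auto

lemma valid_omega:
  assumes w: "w^2+w+1 = (0::'a)" and a0: "al \<noteq> 0"
  shows "valid al (al*w)"
proof -
  note o = omega_facts[OF w, of al]
  have "al \<noteq> al*w"
  proof
    assume "al = al*w" then have "al*1 = al*w" by simp
    then show False using a0 omega_basic[OF w] by (metis mult_left_cancel)
  qed
  then show ?thesis unfolding valid_def using a0 omega_basic[OF w] by auto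
qed

lemma W5:
  assumes w: "w^2+w+1 = (0::'a)" and c: "al^3 = g + 1"
  shows "\<exists>a b p q. valid a b \<and> p \<in> XX g a b \<and> q \<in> XX g a b \<and> p + q \<notin> VV a b"
proof (cases "g \<in> VV al (al*w)")
  case True
  have "g^3 = g + 1" using VV_cubes[OF w True] g0 c by auto
  then have "g^3+g+1 = 0" by (simp add: add.assoc)
  then show ?thesis by (rule W3)
next
  case False
  note o = omega_facts[OF w, of al]
  have a0: "al \<noteq> 0" using c one_plus_g by (auto simp: add.commute)
  have v: "valid al (al*w)" by (rule valid_omega[OF w a0])
  have n1: "1 \<notin> VV al (al*w)"
  proof
    assume "1 \<in> VV al (al*w)"
    then have "1 = g + 1" using VV_cubes[OF w] c by force
    then show False using g0 by (metis add_cancel_right_left)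
  qed
  have n1g: "1 + g \<notin> VV al (al*w)"
  proof
    assume "1 + g \<in> VV al (al*w)"
    then have e: "(1+g)^3 = 1 + g" using VV_cubes[OF w] c one_plus_g by (force simp: add.commute)
    have "(1+g)^3 = (1+g) * (1+g)^2" by (simp add: power2_eq_square power3_eq_cube)
    then have "(1+g) * (1+g)^2 = (1+g) * 1" using e by simp
    then have "(1+g)^2 = 1" using one_plus_g by (metis mult_left_cancel)
    moreover have "(1+g)^2 = (1)*(1+g^2) + 2*(g)" by algebra
    ultimately have "g^2 = 0" by simp
    then show False using g0 by simp
  qed
  have "0 \<in> XX g al (al*w)" using D0[OF v n1 False] o(3) by simp
  moreover have "1 \<in> XX g al (al*w)"
  proof -
    have "al*(al*w)*(al+al*w)+(g+1)*(1+al^2+al*(al*w)+(al*w)^2) = (al^3+(g+1)*al^2)*(w^2+w+1) + (1)*(al^3+g+1) + 2*((-1)*al^3)"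
      by algebra
    moreover have "al^3+g+1 = 0" using c by (simp add: add.assoc)
    ultimately show ?thesis using D1[OF v n1 False n1g] w by simp
  qed
  moreover have "0 + 1 \<notin> VV al (al*w)" using n1 by simp
  ultimately show ?thesis using v by blast
qed

lemma W6:
  assumes w: "w^2+w+1 = (0::'a)" and c: "al^3 = g^3 + g^2" and c4: "al^4 \<noteq> al"
  shows "\<exists>a b p q. valid a b \<and> p \<in> XX g a b \<and> q \<in> XX g a b \<and> p + q \<notin> VV a b"
proof -
  note o = omega_facts[OF w, of al]
  have a0: "al \<noteq> 0" using c4 by auto
  have a3: "al^3 \<noteq> 1"
  proof
    assume "al^3 = 1" then have "al^4 = al" by (simp add: power_Suc[symmetric] numeral_eq_Suc)
    then show False using c4 by simp
  qed
  have v: "valid al (al*w)" by (rule valid_omega[OF w a0])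
  have n1: "1 \<notin> VV al (al*w)"
    using VV_cubes[OF w] a3 by force
  have ng: "g \<notin> VV al (al*w)"
  proof
    assume "g \<in> VV al (al*w)"
    then have "g^3 = g^3 + g^2" using VV_cubes[OF w] c g0 by force
    then show False using g0 by simp
  qed
  have n1g: "1 + g \<notin> VV al (al*w)"
  proof
    assume "1 + g \<in> VV al (al*w)"
    then have e: "(1+g)^3 = g^3 + g^2" using VV_cubes[OF w] c one_plus_g by force
    have "(1+g)^3+(g^3+g^2) = (1)*(1+g) + 2*(g + (2)*g^2 + g^3)" by algebra
    then have "1 + g = 0" using e by simp
    then show False using one_plus_g by simp
  qed
  have "0 \<in> XX g al (al*w)" using D0[OF v n1 ng] o(3) by simp
  moreover have "g \<in> XX g al (al*w)"
  proof -
    have "al*(al*w)*(al+al*w)+(1+g)*(g^2+al^2+al*(al*w)+(al*w)^2) = (al^3+(1+g)*al^2)*(w^2+w+1) + (1)*(al^3+g^3+g^2) + 2*((-1)*al^3)"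
      by algebra
    moreover have "al^3+g^3+g^2 = 0" using c by (simp add: add.assoc)
    ultimately show ?thesis using Dg[OF v n1 ng n1g] w by simp
  qed
  moreover have "0 + g \<notin> VV al (al*w)" using ng by simp
  ultimately show ?thesis using v by blast
qed

lemma cond_witness:
  assumes condn
  shows "\<exists>a b p q. valid a b \<and> p \<in> XX g a b \<and> q \<in> XX g a b \<and> p + q \<notin> VV a b"
  using assms unfolding condn_def
proof (elim disjE conjE)
  assume "3 dvd n" "g^8 = g" "g^2 \<noteq> g"
  then have "g^3+g+1 = 0 \<or> g^3+g^2+1 = 0" using F8_cubic by blast
  then show ?thesis using W3 W4 by blast
next
  assume ev: "even n" and ne: "{g ^ 3 + g ^ 2, g + 1} \<inter> cubes_C \<noteq> {}"
  obtain w :: 'a where w: "w^2+w+1 = 0" using even_omega[OF ev] by blast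
  from ne obtain c where c: "c \<in> {g ^ 3 + g ^ 2, g + 1}" "c \<in> cubes_C" by blast
  then obtain al where al: "c = al^3" "al^4 \<noteq> al" unfolding cubes_C_def by blast
  from c(1) show ?thesis
  proof
    assume "c = g^3 + g^2" then show ?thesis using W6[OF w _ al(2)] al by simp
  next
    assume "c \<in> {g + 1}" then show ?thesis using W5[OF w] al by simp
  qed
qed

lemma pow4_ne:
  assumes "x \<noteq> 0" "x^3 \<noteq> (1::'a)" shows "x^4 \<noteq> x"
proof
  assume "x^4 = x"
  moreover have "x^4 = x * x^3" by (simp add: power_Suc[symmetric])
  ultimately have "x * x^3 = x * 1" by simp
  then show False using assms by (metis mult_left_cancel)
qed

lemma cubes_I:
  assumes "x \<noteq> 0" "x^3 \<noteq> (1::'a)" "c = x^3" shows "c \<in> cubes_C"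
proof -
  have "x^4 \<noteq> x" by (rule pow4_ne[OF assms(1,2)])
  then show ?thesis unfolding cubes_C_def using assms(3) by blast
qed

lemma coset_sub: "p \<in> XX g a b \<Longrightarrow> coset p a b \<subseteq> XX g a b"
  unfolding coset_def using XX_shift by blast

lemma card_VV_le: "card (VV a b) \<le> 4"
  unfolding VV_def by (simp add: card_insert_if)

lemma card_VV_eq: "valid a b \<Longrightarrow> card (VV a (b::'a)) = 4"
  unfolding VV_def valid_def
proof (elim conjE)
  assume h: "a \<noteq> 0" "b \<noteq> 0" "a \<noteq> b"
  have "a + b \<noteq> 0" "a + b \<noteq> a" "a + b \<noteq> b" using h neqD by (auto simp: add.commute)
  then show "card {0, a, b, a + b} = 4" using h by (simp add: card_insert_if)
qed

lemma coset_eq: "p + q \<in> VV a b \<Longrightarrow> coset p a b = coset q a (b::'a)"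
proof -
  assume h: "p + q \<in> VV a b"
  have sub: "coset p a b \<subseteq> coset q a b" if "p + q \<in> VV a b" for p q
  proof
    fix x assume "x \<in> coset p a b"
    then obtain v where v: "v \<in> VV a b" "x = p + v" unfolding coset_def by blast
    have "p + q + v \<in> VV a b" using VV_add[OF that v(1)] .
    moreover have "x = q + (p + q + v)" using v(2) by (simp add: ac_simps)
    ultimately show "x \<in> coset q a b" unfolding coset_def by blast
  qed
  show ?thesis using sub[OF h] sub[of q p] h by (auto simp: add.commute)
qed

lemma coset_disj: "p + q \<notin> VV a b \<Longrightarrow> coset p a b \<inter> coset q a (b::'a) = {}"
proof (rule ccontr)
  assume h: "p + q \<notin> VV a b" and "coset p a b \<inter> coset q a b \<noteq> {}"
  then obtain v v' where v: "v \<in> VV a b" "v' \<in> VV a b" "p + v = q + v'" unfolding coset_def by blast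
  have "p + q = v + v'" using v(3) by (metis add.assoc add.commute self2)
  then show False using h VV_add[OF v(1) v(2)] by simp
qed

lemma mem_coset: "x \<in> coset p a b \<longleftrightarrow> x + p \<in> VV a (b::'a)"
proof
  assume "x \<in> coset p a b" then obtain v where "v \<in> VV a b" "x = p + v" unfolding coset_def by blast
  then show "x + p \<in> VV a b" by (simp add: ac_simps)
next
  assume h: "x + p \<in> VV a b"
  have "x = p + (x + p)" by (simp add: ac_simps)
  then show "x \<in> coset p a b" unfolding coset_def using h by blast
qed

end

context L3 begin

lemma PL01:
  assumes v: "valid a b" and m0: "0 \<in> XX g a b" and m1: "1 \<in> XX g a b" and n1: "1 \<notin> VV a b"
  shows condn
proof -
  consider (c1) "1 + g \<in> VV a b" | (cg) "g \<in> VV a b" | (cn) "1 + g \<notin> VV a b" "g \<notin> VV a b" by blast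
  then show ?thesis
  proof cases
    case c1
    obtain d where d: "valid (1+g) d" "XX g a b = XX g (1+g) d" "VV a b = VV (1+g) d"
      using normalize[OF v c1 one_plus_g(1)] by blast
    have "1 \<notin> XX g (1+g) d" using Q1[OF d(1)] n1 d(3) by simp
    then show ?thesis using m1 d(2) by simp
  next
    case cg
    obtain d where d: "valid g d" "XX g a b = XX g g d" "VV a b = VV g d"
      using normalize[OF v cg g0] by blast
    have n1': "1 \<notin> VV g d" using n1 d(3) by simp
    have h: "d^2+g*d+g = 0" using C0[OF d(1) n1'] m0 d(2) by simp
    have "g^3+g^2+1 = 0" using C1[OF d(1) n1' h] m1 d(2) by simp
    then show ?thesis using cubic_cond unfolding condn_def by blast
  next
    case cn
    have A: "a^2+a*b+b^2 = 0" using D0[OF v n1 cn(2)] m0 by simp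
    have h: "a*b*(a+b)+(g+1)*(1+a^2+a*b+b^2) = 0" using D1[OF v n1 cn(2) cn(1)] m1 by simp
    have e: "1+a^2+a*b+b^2 = 1"
    proof -
      have "1+a^2+a*b+b^2 = 1 + (a^2+a*b+b^2)" by (simp add: add.assoc)
      also have "\<dots> = 1" using A by simp
      finally show ?thesis .
    qed
    have "a*b*(a+b) + (g+1) = 0" using h by (simp only: e mult_1_right)
    then have "a*b*(a+b) = g + 1" using sum0 by blast
    then have c: "a^3 = g + 1" using cube_A[OF A] by simp
    have a0: "a \<noteq> 0" using v unfolding valid_def by simp
    have "g + 1 \<in> cubes_C" by (rule cubes_I[OF a0 cube_ne1[OF v A n1]]) (simp add: c)
    moreover have "even n" using omega_even[OF omega_of_A[OF a0 A]] .
    ultimately show ?thesis unfolding condn_def by blast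
  qed
qed

lemma PL0g:
  assumes v: "valid a b" and m0: "0 \<in> XX g a b" and mg: "g \<in> XX g a b" and ng: "g \<notin> VV a b"
  shows condn
proof -
  consider (c1) "1 + g \<in> VV a b" | (cg) "1 \<in> VV a b" | (cn) "1 + g \<notin> VV a b" "1 \<notin> VV a b" by blast
  then show ?thesis
  proof cases
    case c1
    have m1: "1 \<in> XX g a b" using XX_shift[OF mg c1] by simp
    have n1: "1 \<notin> VV a b"
    proof
      assume "1 \<in> VV a b" then have "1 + (1 + g) \<in> VV a b" using VV_add c1 by blast
      then show False using ng by simp
    qed
    obtain d where d: "valid (1+g) d" "XX g a b = XX g (1+g) d" "VV a b = VV (1+g) d"
      using normalize[OF v c1 one_plus_g(1)] by blast
    have "1 \<notin> XX g (1+g) d" using Q1[OF d(1)] n1 d(3) by simp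
    then show ?thesis using m1 d(2) by simp
  next
    case cg
    obtain d where d: "valid 1 d" "XX g a b = XX g 1 d" "VV a b = VV 1 d"
      using normalize[OF v cg] by auto
    have ng': "g \<notin> VV 1 d" using ng d(3) by simp
    have h: "d^2+d+g = 0" using B0[OF d(1) ng'] m0 d(2) by simp
    have "g^3+g+1 = 0" using Bg[OF d(1) ng' h] mg d(2) by simp
    then show ?thesis using cubic_cond unfolding condn_def by blast
  next
    case cn
    have A: "a^2+a*b+b^2 = 0" using D0[OF v cn(2) ng] m0 by simp
    have h: "a*b*(a+b)+(1+g)*(g^2+a^2+a*b+b^2) = 0" using Dg[OF v cn(2) ng cn(1)] mg by simp
    have e: "g^2+a^2+a*b+b^2 = g^2"
    proof -
      have "g^2+a^2+a*b+b^2 = g^2 + (a^2+a*b+b^2)" by (simp add: add.assoc)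
      also have "\<dots> = g^2" using A by simp
      finally show ?thesis .
    qed
    have "a*b*(a+b) + (1+g)*g^2 = 0" using h by (simp only: e)
    then have "a*b*(a+b) = (1+g)*g^2" using sum0 by blast
    then have c: "a^3 = g^3 + g^2" using cube_A[OF A] by (simp add: algebra_simps power2_eq_square power3_eq_cube)
    have a0: "a \<noteq> 0" using v unfolding valid_def by simp
    have "g^3 + g^2 \<in> cubes_C" by (rule cubes_I[OF a0 cube_ne1[OF v A cn(2)]]) (simp add: c)
    moreover have "even n" using omega_even[OF omega_of_A[OF a0 A]] .
    ultimately show ?thesis unfolding condn_def by blast
  qed
qed

lemma PL1g:
  assumes v: "valid a b" and m1: "1 \<in> XX g a b" and mg: "g \<in> XX g a b" and n: "1 + g \<notin> VV a b"
  shows condn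
proof -
  consider (c1) "1 \<in> VV a b" | (cg) "g \<in> VV a b" | (cn) "1 \<notin> VV a b" "g \<notin> VV a b" by blast
  then show ?thesis
  proof cases
    case c1
    have m0: "0 \<in> XX g a b" using XX_shift[OF m1 c1] by simp
    have "g \<notin> VV a b" using VV_add[OF c1] n by blast
    then show ?thesis using PL0g[OF v m0 mg] by blast
  next
    case cg
    have m0: "0 \<in> XX g a b" using XX_shift[OF mg cg] by simp
    have "1 \<notin> VV a b" using VV_add[OF _ cg] n by blast
    then show ?thesis using PL01[OF v m0 m1] by blast
  next
    case cn
    then show ?thesis using DPQ[OF v cn(1) cn(2) n m1 mg] by blast
  qed
qed

lemma coset_card_le: "card (coset p a b) \<le> 4"
proof -
  have "card (coset p a b) \<le> card (VV a b)" unfolding coset_def by (rule card_image_le) (simp add: VV_def)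
  then show ?thesis using card_VV_le[of a b] by simp
qed

lemma coset_card_eq: "valid a b \<Longrightarrow> card (coset p a (b::'a)) = 4"
  unfolding coset_def by (subst card_image) (auto simp: inj_on_def card_VV_eq)

lemma cover2:
  assumes v: "valid a b" and x: "x \<in> XX g a b"
  shows "\<exists>p\<in>{0,1,g}. p \<in> XX g a b \<and> x \<in> coset p a b"
proof -
  have "x + 0 \<in> VV a b \<or> x + 1 \<in> VV a b \<or> x + g \<in> VV a b" using cover[OF v x] by simp
  then obtain p where p: "p \<in> {0,1,g}" "x + p \<in> VV a b" by blast
  have "x + (x + p) \<in> XX g a b" using XX_shift[OF x p(2)] .
  then have "p \<in> XX g a b" by simp
  then show ?thesis using p mem_coset by blast
qed

lemma le8:
  assumes v: "valid a b" shows "card (XX g a b) \<le> 8"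
proof -
  have "\<exists>p q. XX g a b \<subseteq> coset p a b \<union> coset q a b"
  proof (cases "0 \<in> XX g a b \<and> 1 \<in> XX g a b \<and> g \<in> XX g a b")
    case False
    then obtain p q where pq: "\<forall>r\<in>{0,1,g}. r \<in> XX g a b \<longrightarrow> r = p \<or> r = q" by blast
    have "XX g a b \<subseteq> coset p a b \<union> coset q a b"
    proof
      fix x assume "x \<in> XX g a b"
      then obtain r where "r \<in> {0,1,g}" "r \<in> XX g a b" "x \<in> coset r a b" using cover2[OF v] by blast
      then show "x \<in> coset p a b \<union> coset q a b" using pq by blast
    qed
    then show ?thesis by blast
  next
    case True
    then have m: "0 \<in> XX g a b" "1 \<in> XX g a b" "g \<in> XX g a b" by auto
    have "1 \<in> VV a b \<or> g \<in> VV a b \<or> 1 + g \<in> VV a b" using DPQ[OF v] m by blast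
    then obtain p q where pq: "\<forall>r\<in>{0,1,g}. coset r a b = coset p a b \<or> coset r a b = coset q a b"
    proof (elim disjE)
      assume "1 \<in> VV a b" then have "coset 1 a b = coset 0 a b" using coset_eq[of 1 0] by simp
      then show ?thesis using that[of 0 g] by auto
    next
      assume "g \<in> VV a b" then have "coset g a b = coset 0 a b" using coset_eq[of g 0] by simp
      then show ?thesis using that[of 0 1] by auto
    next
      assume "1 + g \<in> VV a b" then have "coset g a b = coset 1 a b" using coset_eq[of g 1] by (simp add: add.commute)
      then show ?thesis using that[of 0 1] by auto
    qed
    have "XX g a b \<subseteq> coset p a b \<union> coset q a b"
    proof
      fix x assume "x \<in> XX g a b"
      then obtain r where "r \<in> {0,1,g}" "x \<in> coset r a b" using cover2[OF v] by blast
      then show "x \<in> coset p a b \<union> coset q a b" using pq by blast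
    qed
    then show ?thesis by blast
  qed
  then obtain p q where pq: "XX g a b \<subseteq> coset p a b \<union> coset q a b" by blast
  have "card (XX g a b) \<le> card (coset p a b \<union> coset q a b)" by (rule card_mono[OF _ pq]) simp
  also have "\<dots> \<le> card (coset p a b) + card (coset q a b)" by (rule card_Un_le)
  also have "\<dots> \<le> 8" using coset_card_le[of p a b] coset_card_le[of q a b] by simp
  finally show ?thesis .
qed

lemma le4:
  assumes v: "valid a b" and nc: "\<not> condn" shows "card (XX g a b) \<le> 4"
proof (cases "XX g a b = {}")
  case True then show ?thesis by simp
next
  case False
  then obtain x0 where "x0 \<in> XX g a b" by blast
  then obtain p0 where p0: "p0 \<in> {0,1,g}" "p0 \<in> XX g a b" using cover2[OF v] by blast
  have pairs: "p + q \<in> VV a b" if "p \<in> {0,1,g}" "q \<in> {0,1,g}" "p \<in> XX g a b" "q \<in> XX g a b" for p q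
  proof -
    have z: "0 \<in> VV a b" unfolding VV_def by simp
    have "p = q \<or> {p,q} = {0,1} \<or> {p,q} = {0,g} \<or> {p,q} = {1,g}" using that(1,2) by auto
    then show ?thesis
    proof (elim disjE)
      assume "p = q" then show ?thesis using z by simp
    next
      assume e: "{p,q} = {0,1}"
      then have "0 \<in> XX g a b" "1 \<in> XX g a b" using that by (auto simp: doubleton_eq_iff)
      then have "1 \<in> VV a b" using PL01[OF v] nc by blast
      then show ?thesis using e by (auto simp: doubleton_eq_iff)
    next
      assume e: "{p,q} = {0,g}"
      then have "0 \<in> XX g a b" "g \<in> XX g a b" using that by (auto simp: doubleton_eq_iff)
      then have "g \<in> VV a b" using PL0g[OF v] nc by blast
      then show ?thesis using e by (auto simp: doubleton_eq_iff)
    next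
      assume e: "{p,q} = {1,g}"
      then have "1 \<in> XX g a b" "g \<in> XX g a b" using that by (auto simp: doubleton_eq_iff)
      then have "1 + g \<in> VV a b" using PL1g[OF v] nc by blast
      then show ?thesis using e by (auto simp: doubleton_eq_iff add.commute)
    qed
  qed
  have "XX g a b \<subseteq> coset p0 a b"
  proof
    fix x assume x: "x \<in> XX g a b"
    then obtain r where r: "r \<in> {0,1,g}" "r \<in> XX g a b" "x \<in> coset r a b" using cover2[OF v] by blast
    have "coset r a b = coset p0 a b" using coset_eq pairs[OF r(1) p0(1) r(2) p0(2)] by blast
    then show "x \<in> coset p0 a b" using r(3) by simp
  qed
  then have "card (XX g a b) \<le> card (coset p0 a b)" by (intro card_mono) simp_all
  then show ?thesis using coset_card_le[of p0 a b] by simp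
qed

lemma ge4:
  assumes "valid a b" "p \<in> XX g a b" shows "4 \<le> card (XX g a b)"
proof -
  have "card (coset p a b) \<le> card (XX g a b)" by (rule card_mono) (simp_all add: coset_sub[OF assms(2)])
  then show ?thesis using coset_card_eq[OF assms(1)] by simp
qed

lemma ge8: "valid a b \<Longrightarrow> p \<in> XX g a b \<Longrightarrow> q \<in> XX g a b \<Longrightarrow> p + q \<notin> VV a b \<Longrightarrow> 8 \<le> card (XX g a b)"
proof -
  assume v: "valid a b" and p: "p \<in> XX g a b" and q: "q \<in> XX g a b" and pq: "p + q \<notin> VV a b"
  have "card (coset p a b \<union> coset q a b) = 8"
    using card_Un_disjoint[of "coset p a b" "coset q a b"] coset_disj[OF pq] coset_card_eq[OF v] by simp
  moreover have "card (coset p a b \<union> coset q a b) \<le> card (XX g a b)"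
    using coset_sub[OF p] coset_sub[OF q] by (intro card_mono) auto
  ultimately show ?thesis by simp
qed

end

context L3 begin

lemma bcount: "boomerang_count (swapped_inv g) a b = card (XX g a b)"
  by (simp add: boomerang_count_def XX_def)

lemma main_L3: "boomerang_uniformity (swapped_inv g) = (if condn then 8 else 4)"
proof -
  define S where "S = {boomerang_count (swapped_inv g) a b | a b. a \<noteq> 0 \<and> b \<noteq> 0 \<and> a \<noteq> b}"
  define M where "M = (if condn then 8 else 4::nat)"
  have up: "s \<le> M" if "s \<in> S" for s
  proof -
    from that obtain a b where ab: "s = card (XX g a b)" "valid a b"
      unfolding S_def valid_def bcount by blast
    show ?thesis
    proof (cases condn)
      case True then show ?thesis using le8[OF ab(2)] ab(1) unfolding M_def by simp
    next
      case False then show ?thesis using le4[OF ab(2)] ab(1) unfolding M_def by simp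
    qed
  qed
  have ex: "\<exists>a b. valid a b \<and> M \<le> card (XX g a b)"
  proof (cases condn)
    case True
    then obtain a b p q where "valid a b" "p \<in> XX g a b" "q \<in> XX g a b" "p + q \<notin> VV a b"
      using cond_witness by blast
    then show ?thesis using ge8 True unfolding M_def by fastforce
  next
    case False
    have "\<exists>a b p. valid a b \<and> p \<in> XX g a b"
    proof (cases "even n")
      case True then show ?thesis using W_even by blast
    next
      case False then show ?thesis using W_odd by blast
    qed
    then show ?thesis using ge4 False unfolding M_def by fastforce
  qed
  then obtain a b where ab: "valid a b" "M \<le> card (XX g a b)" by blast
  have "card (XX g a b) \<in> S" using ab(1) unfolding S_def valid_def bcount by blast
  moreover then have "card (XX g a b) = M" using up ab(2) by (meson le_antisym)
  ultimately have MS: "M \<in> S" by simp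
  have fin: "finite S"
  proof (rule finite_subset)
    show "S \<subseteq> {..card (UNIV::'a set)}"
      unfolding S_def bcount by (auto intro!: card_mono)
  qed simp
  have "Max S = M" by (rule Max_eqI[OF fin up MS])
  then show ?thesis unfolding boomerang_uniformity_def S_def M_def by simp
qed

end

theorem corollary4p2:
  fixes \<gamma> :: "'a::{field, finite}" and n :: nat
  assumes "n > 0"
    and "card (UNIV :: 'a set) = 2 ^ n"
    and "\<gamma> \<noteq> 0" and "\<gamma> \<noteq> 1"
  shows "boomerang_uniformity (swapped_inv \<gamma>) =
           (if (even n \<and> {\<gamma> ^ 3 + \<gamma> ^ 2, \<gamma> + 1} \<inter> cubes_C \<noteq> {})
               \<or> (3 dvd n \<and> \<gamma> ^ 8 = \<gamma> \<and> \<gamma> ^ 2 \<noteq> \<gamma>)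
            then 8 else 4)
       \<and> (odd n \<and> \<not> 3 dvd n \<longrightarrow> boomerang_uniformity (swapped_inv \<gamma>) = 4)"
proof -
  have c2: "(2::'a) = 0" by (rule char2_of_card[OF assms(2,1)])
  interpret L3 \<gamma> n by unfold_locales (use assms c2 in auto)
  have m: "boomerang_uniformity (swapped_inv \<gamma>) = (if condn then 8 else 4)" by (rule main_L3)
  show ?thesis using m unfolding condn_def by auto
qed

end
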